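(* Let $n\ge1$, and let $\tau^1,\dots,\tau^n$, $\eta^{\mathcal J}$, $\Lambda^{\mathcal J}$ be as in the context. Let $t_1,\dots,t_n\ge0$ and let $\sigma$ be a permutation of $\{1,\dots,n\}$ with $t_{\sigma(1)}\le t_{\sigma(2)}\le\cdots\le t_{\sigma(n)}$. For $k=1,\dots,n$ set $A_k:=\{\sigma(k),\sigma(k+1),\dots,\sigma(n)\}$ and $A_{n+1}:=\emptyset$. Then for all $t$ with $0\le t\le\min(t_1,\dots,t_n)$, $$ \mathbb P(\tau^1>t_1,\dots,\tau^n>t_n\mid\mathcal F_t)=\eta^{A_1}_t\exp\left(-\sum_{k=1}^n\left(\Lambda^{A_k}_{t_{\sigma(k)}}-\Lambda^{A_{k+1}}_{t_{\sigma(k)}}\right)\right), $$ where $A_1=\{1,\dots,n\}$ and $\Lambda^{\emptyset}\equiv0$.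
   Context: Let $(\Omega,\mathcal G,\mathbb F,\mathbb P)$ be a filtered probability space, $\mathbb F=(\mathcal F_t)_{t\ge0}$ satisfying the usual conditions. For $i=1,\dots,n$, let $K^i$ be an $\mathbb F$-adapted, càdlàg, increasing process with $K^i_0=0$ (possibly dependent across $i$), and let $\Theta^1,\dots,\Theta^n$ be unit exponential random variables, mutually independent and independent of $\mathcal F_\infty$. Define $\tau^i:=\inf\{t\ge0:K^i_t\ge\Theta^i\}$. For nonempty $\mathcal J\subseteq\{1,\dots,n\}$ let $K^{\mathcal J}:=\sum_{j\in\mathcal J}K^j$ (and $K^{\{i\}}=K^i$); then $\mathbb P(\min_{j\in\mathcal J}\tau^j>t\mid\mathcal F_t)=e^{-K^{\mathcal J}_t}$. Let $K^{\mathcal J,c}$ be the continuous part of $K^{\mathcal J}$, let $I^{\mathcal J}_t:=\sum_{s\le t}(1-e^{-\Delta K^{\mathcal J}_s})$ with canonical decomposition $I^{\mathcal J}=M^{I^{\mathcal J}}+A^{I^{\mathcal J}}$ ($M^{I^{\mathcal J}}$ an $\mathbb F$-local martingale, $A^{I^{\mathcal J}}$ $\mathbb F$-predictable of finite variation), and set $\Lambda^{\mathcal J}:=K^{\mathcal J,c}+A^{I^{\mathcal J}}$; set $\Lambda^\emptyset:=0$. Standing assumptions: for every nonempty $\mathcal J$, $K^{\mathcal J,c}$ and $A^{I^{\mathcal J}}$ are deterministic, $\Lambda^{\mathcal J}$ is continuous (as holds when the associated random times are totally inaccessible), and $e^{-K^{\mathcal J}_t}=\eta^{\mathcal J}_t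 e^{-\Lambda^{\mathcal J}_t}$ with $\eta^{\mathcal J}$ a nonnegative $\mathbb F$-martingale, $\eta^{\mathcal J}_0=1$. Write $\Lambda^i=\Lambda^{\{i\}}$, $\eta^i=\eta^{\{i\}}$. *)

theory Defs
  imports "HOL-Probability.Probability"
begin

definition filtration :: "'a measure \<Rightarrow> (real \<Rightarrow> 'a measure) \<Rightarrow> bool" where
  "filtration M F \<longleftrightarrow> (\<forall>t\<ge>0. subalgebra M (F t)) \<and>
     (\<forall>s t. 0 \<le> s \<and> s \<le> t \<longrightarrow> sets (F s) \<subseteq> sets (F t))"

text \<open>Usual conditions: right-continuity and completeness (F 0 contains all
  subsets of M-null sets, which also forces M to be complete).\<close>
definition usual_conditions :: "'a measure \<Rightarrow> (real \<Rightarrow> 'a measure) \<Rightarrow> bool" where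
  "usual_conditions M F \<longleftrightarrow> filtration M F \<and>
     (\<forall>t\<ge>0. sets (F t) = (\<Inter>s\<in>{t<..}. sets (F s))) \<and>
     (\<forall>A. A \<subseteq> space M \<and> (\<exists>N\<in>null_sets M. A \<subseteq> N) \<longrightarrow> A \<in> sets (F 0))"

definition adapted :: "(real \<Rightarrow> 'a measure) \<Rightarrow> (real \<Rightarrow> 'a \<Rightarrow> real) \<Rightarrow> bool" where
  "adapted F X \<longleftrightarrow> (\<forall>t\<ge>0. X t \<in> borel_measurable (F t))"

definition cadlag :: "'a measure \<Rightarrow> (real \<Rightarrow> 'a \<Rightarrow> real) \<Rightarrow> bool" where
  "cadlag M X \<longleftrightarrow> (\<forall>\<omega>\<in>space M. \<forall>t\<ge>0.
      ((\<lambda>s. X s \<omega>) \<longlongrightarrow> X t \<omega>) (at_right t) \<and>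
      (t > 0 \<longrightarrow> (\<exists>l. ((\<lambda>s. X s \<omega>) \<longlongrightarrow> l) (at_left t))))"

definition martingale :: "'a measure \<Rightarrow> (real \<Rightarrow> 'a measure) \<Rightarrow> (real \<Rightarrow> 'a \<Rightarrow> real) \<Rightarrow> bool" where
  "martingale M F X \<longleftrightarrow> adapted F X \<and> (\<forall>t\<ge>0. integrable M (X t)) \<and>
     (\<forall>s t. 0 \<le> s \<and> s \<le> t \<longrightarrow> (AE \<omega> in M. real_cond_exp M (F s) (X t) \<omega> = X s \<omega>))"

text \<open>First passage time tau^i = inf{t >= 0 : K^i_t >= Theta^i}, with inf {} = oo.\<close>
definition hit_time :: "(real \<Rightarrow> 'a \<Rightarrow> real) \<Rightarrow> ('a \<Rightarrow> real) \<Rightarrow> 'a \<Rightarrow> ereal" where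
  "hit_time K \<Theta> \<omega> = Inf {ereal t | t. 0 \<le> t \<and> K t \<omega> \<ge> \<Theta> \<omega>}"

end

theory Submission
  imports Defs
begin

lemma sfs_sub:
  assumes "prob_space M" "subalgebra M G"
  shows "sigma_finite_subalgebra M G"
proof -
  interpret prob_space M by fact
  have "finite_measure_subalgebra M G" by unfold_locales (fact assms(2))
  then show ?thesis by (rule finite_measure_subalgebra_is_sigma_finite)
qed

lemma mart_part:
  fixes M :: "'a measure" and F :: "real \<Rightarrow> 'a measure" and n :: nat
    and K :: "nat \<Rightarrow> real \<Rightarrow> 'a \<Rightarrow> real"
    and \<eta> :: "nat set \<Rightarrow> real \<Rightarrow> 'a \<Rightarrow> real" and \<Lambda> :: "nat set \<Rightarrow> real \<Rightarrow> real"
    and tt :: "nat \<Rightarrow> real" and \<sigma> :: "nat \<Rightarrow> nat"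
  assumes P: "prob_space M"
    and filt: "filtration M F"
    and K_adapted: "\<And>i. i \<in> {1..n} \<Longrightarrow> adapted F (K i)"
    and K_nn: "\<And>i t \<omega>. i \<in> {1..n} \<Longrightarrow> 0 \<le> t \<Longrightarrow> \<omega> \<in> space M \<Longrightarrow> 0 \<le> K i t \<omega>"
    and Lambda_empty: "\<And>t. \<Lambda> {} t = 0"
    and eta_mart: "\<And>J. J \<subseteq> {1..n} \<Longrightarrow> J \<noteq> {} \<Longrightarrow> martingale M F (\<eta> J)"
    and factor: "\<And>J t \<omega>. J \<subseteq> {1..n} \<Longrightarrow> J \<noteq> {} \<Longrightarrow> t \<ge> 0 \<Longrightarrow> \<omega> \<in> space M \<Longrightarrow>
         exp (- (\<Sum>j\<in>J. K j t \<omega>)) = \<eta> J t \<omega> * exp (- \<Lambda> J t)"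
    and tt_nonneg: "\<And>i. i \<in> {1..n} \<Longrightarrow> tt i \<ge> 0"
    and \<sigma>_perm: "\<sigma> permutes {1..n}"
    and \<sigma>_sorted: "\<And>k l. 1 \<le> k \<Longrightarrow> k \<le> l \<Longrightarrow> l \<le> n \<Longrightarrow> tt (\<sigma> k) \<le> tt (\<sigma> l)"
    and d: "d \<le> n"
  shows "\<forall>s. 0 \<le> s \<and> (\<forall>k\<in>{n+1-d..n}. s \<le> tt (\<sigma> k)) \<longrightarrow>
     (AE \<omega> in M. real_cond_exp M (F s) (\<lambda>\<omega>. exp (- (\<Sum>i\<in>{n+1-d..n}. K (\<sigma> i) (tt (\<sigma> i)) \<omega>))) \<omega>
        = exp (- (\<Sum>j\<in>\<sigma> ` {n+1-d..n}. K j s \<omega>) + \<Lambda> (\<sigma> ` {n+1-d..n}) s) *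
          exp (- (\<Sum>k=n+1-d..n. \<Lambda> (\<sigma> ` {k..n}) (tt (\<sigma> k)) - \<Lambda> (\<sigma> ` {Suc k..n}) (tt (\<sigma> k)))))"
  using d
proof (induction d)
  interpret prob_space M by fact
  case 0
  show ?case
  proof (intro allI impI)
    fix s assume s: "0 \<le> s \<and> (\<forall>k\<in>{n+1-0..n}. s \<le> tt (\<sigma> k))"
    have sub: "subalgebra M (F s)" using filt s by (simp add: filtration_def)
    interpret FS: sigma_finite_subalgebra M "F s" by (rule sfs_sub[OF P sub])
    have "AE \<omega> in M. real_cond_exp M (F s) (\<lambda>\<omega>. 1) \<omega> = 1"
      by (rule FS.real_cond_exp_F_meas) auto
    then show "AE \<omega> in M. real_cond_exp M (F s) (\<lambda>\<omega>. exp (- (\<Sum>i\<in>{n+1-0..n}. K (\<sigma> i) (tt (\<sigma> i)) \<omega>))) \<omega>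
        = exp (- (\<Sum>j\<in>\<sigma> ` {n+1-0..n}. K j s \<omega>) + \<Lambda> (\<sigma> ` {n+1-0..n}) s) *
          exp (- (\<Sum>k=n+1-0..n. \<Lambda> (\<sigma> ` {k..n}) (tt (\<sigma> k)) - \<Lambda> (\<sigma> ` {Suc k..n}) (tt (\<sigma> k))))"
      by (simp add: Lambda_empty)
  qed
next
  interpret prob_space M by fact
  case (Suc d)
  define m' where "m' = n - d"
  define m where "m = Suc m'"
  have m'1: "1 \<le> m'" "m' \<le> n" using Suc.prems by (auto simp: m'_def)
  have em: "n + 1 - d = m" "n + 1 - Suc d = m'" using Suc.prems by (auto simp: m_def m'_def)
  have IH: "\<forall>s. 0 \<le> s \<and> (\<forall>k\<in>{m..n}. s \<le> tt (\<sigma> k)) \<longrightarrow>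
     (AE \<omega> in M. real_cond_exp M (F s) (\<lambda>\<omega>. exp (- (\<Sum>i\<in>{m..n}. K (\<sigma> i) (tt (\<sigma> i)) \<omega>))) \<omega>
        = exp (- (\<Sum>j\<in>\<sigma> ` {m..n}. K j s \<omega>) + \<Lambda> (\<sigma> ` {m..n}) s) *
          exp (- (\<Sum>k=m..n. \<Lambda> (\<sigma> ` {k..n}) (tt (\<sigma> k)) - \<Lambda> (\<sigma> ` {Suc k..n}) (tt (\<sigma> k)))))"
    using Suc.IH Suc.prems em by simp
  have sig_in: "\<And>k. k \<in> {1..n} \<Longrightarrow> \<sigma> k \<in> {1..n}" using permutes_in_image[OF \<sigma>_perm] by blast
  have injs: "inj \<sigma>" using \<sigma>_perm permutes_inj by blast
  have subF: "\<And>t. 0 \<le> t \<Longrightarrow> subalgebra M (F t)" using filt by (simp add: filtration_def)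
  have KF: "\<And>i t. i \<in> {1..n} \<Longrightarrow> 0 \<le> t \<Longrightarrow> K i t \<in> borel_measurable (F t)"
    using K_adapted by (simp add: adapted_def)
  have KM: "\<And>i t. i \<in> {1..n} \<Longrightarrow> 0 \<le> t \<Longrightarrow> K i t \<in> borel_measurable M"
    using KF subF measurable_from_subalg by blast
  define u where "u = tt (\<sigma> m')"
  have u0: "0 \<le> u" unfolding u_def using m'1 sig_in tt_nonneg by auto
  have um: "\<forall>k\<in>{m..n}. u \<le> tt (\<sigma> k)" unfolding u_def m_def using m'1 \<sigma>_sorted by auto
  define C where "C = exp (- (\<Sum>k=m..n. \<Lambda> (\<sigma> ` {k..n}) (tt (\<sigma> k)) - \<Lambda> (\<sigma> ` {Suc k..n}) (tt (\<sigma> k))))"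
  define Am' where "Am' = \<sigma> ` {m'..n}"
  define Am where "Am = \<sigma> ` {m..n}"
  have Aeq: "Am' = insert (\<sigma> m') Am" "\<sigma> m' \<notin> Am"
    using m'1 injs by (auto simp: Am'_def Am_def m_def inj_eq)
  have Am'sub: "Am' \<subseteq> {1..n}" "Am' \<noteq> {}" using m'1 sig_in by (auto simp: Am'_def)
  have KSsplit: "\<And>t \<omega>. (\<Sum>j\<in>Am'. K j t \<omega>) = K (\<sigma> m') t \<omega> + (\<Sum>j\<in>Am. K j t \<omega>)"
    using Aeq by (simp add: Am_def)
  have Wsplit: "(\<lambda>\<omega>. exp (- (\<Sum>i\<in>{m'..n}. K (\<sigma> i) (tt (\<sigma> i)) \<omega>)))
      = (\<lambda>\<omega>. exp (- K (\<sigma> m') u \<omega>) * exp (- (\<Sum>i\<in>{m..n}. K (\<sigma> i) (tt (\<sigma> i)) \<omega>)))"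
    using m'1 by (simp add: sum.atLeast_Suc_atMost m_def u_def exp_add[symmetric])
  have Csplit: "exp (- (\<Sum>k=m'..n. \<Lambda> (\<sigma> ` {k..n}) (tt (\<sigma> k)) - \<Lambda> (\<sigma> ` {Suc k..n}) (tt (\<sigma> k))))
      = exp (- (\<Lambda> Am' u - \<Lambda> Am u)) * C"
    using m'1 by (simp add: sum.atLeast_Suc_atMost m_def u_def C_def Am'_def Am_def exp_add[symmetric])
  have Wmeas: "(\<lambda>\<omega>. exp (- (\<Sum>i\<in>{k..n}. K (\<sigma> i) (tt (\<sigma> i)) \<omega>))) \<in> borel_measurable M" if "1 \<le> k" for k
  proof -
    have [measurable]: "(\<lambda>\<omega>. \<Sum>i\<in>{k..n}. K (\<sigma> i) (tt (\<sigma> i)) \<omega>) \<in> borel_measurable M"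
      by (rule borel_measurable_sum) (use that sig_in tt_nonneg KM in auto)
    show ?thesis by measurable
  qed
  have Wint: "integrable M (\<lambda>\<omega>. exp (- (\<Sum>i\<in>{k..n}. K (\<sigma> i) (tt (\<sigma> i)) \<omega>)))" if "1 \<le> k" for k
  proof (rule integrable_const_bound[where B=1])
    show "AE \<omega> in M. norm (exp (- (\<Sum>i\<in>{k..n}. K (\<sigma> i) (tt (\<sigma> i)) \<omega>))) \<le> 1"
    proof (rule AE_I2)
      fix \<omega> assume w: "\<omega> \<in> space M"
      have "0 \<le> (\<Sum>i\<in>{k..n}. K (\<sigma> i) (tt (\<sigma> i)) \<omega>)"
        by (rule sum_nonneg) (use that sig_in tt_nonneg K_nn w in auto)
      then show "norm (exp (- (\<Sum>i\<in>{k..n}. K (\<sigma> i) (tt (\<sigma> i)) \<omega>))) \<le> 1" by simp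
    qed
  qed (rule Wmeas[OF that])
  show ?case
  proof (intro allI impI)
    fix s assume s: "0 \<le> s \<and> (\<forall>k\<in>{n+1-Suc d..n}. s \<le> tt (\<sigma> k))"
    have s0: "0 \<le> s" and su: "s \<le> u" using s m'1 em by (auto simp: u_def)
    interpret FS: sigma_finite_subalgebra M "F s" by (rule sfs_sub[OF P subF[OF s0]])
    interpret FU: sigma_finite_subalgebra M "F u" by (rule sfs_sub[OF P subF[OF u0]])
    have subUS: "subalgebra (F u) (F s)"
      using filt s0 su subF[OF s0] subF[OF u0] by (simp add: filtration_def subalgebra_def)
    let ?W' = "\<lambda>\<omega>. exp (- (\<Sum>i\<in>{m'..n}. K (\<sigma> i) (tt (\<sigma> i)) \<omega>))"
    let ?W = "\<lambda>\<omega>. exp (- (\<Sum>i\<in>{m..n}. K (\<sigma> i) (tt (\<sigma> i)) \<omega>))"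
    have Kmu[measurable]: "K (\<sigma> m') u \<in> borel_measurable (F u)" using KF sig_in m'1 u0 by auto
    have etaM: "martingale M F (\<eta> Am')" using eta_mart Am'sub by auto
    have etaFu[measurable]: "\<eta> Am' u \<in> borel_measurable (F u)" using etaM u0 by (simp add: martingale_def adapted_def)
    have etaMu[measurable]: "\<eta> Am' u \<in> borel_measurable M" using etaFu subF[OF u0] measurable_from_subalg by blast
    have etaint: "integrable M (\<eta> Am' u)" using etaM u0 by (simp add: martingale_def)
    have e1: "AE \<omega> in M. real_cond_exp M (F s) (real_cond_exp M (F u) ?W') \<omega> = real_cond_exp M (F s) ?W' \<omega>"
      by (rule FS.real_cond_exp_nested_subalg[OF subF[OF u0] subUS Wint]) (use m'1 in simp)
    have e2: "AE \<omega> in M. real_cond_exp M (F u) ?W' \<omega> = exp (- K (\<sigma> m') u \<omega>) * real_cond_exp M (F u) ?W \<omega>"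
      unfolding Wsplit
    proof (rule FU.real_cond_exp_mult)
      show "(\<lambda>\<omega>. exp (- K (\<sigma> m') u \<omega>)) \<in> borel_measurable (F u)" by measurable
      show "?W \<in> borel_measurable M" by (rule Wmeas) (simp add: m_def)
      show "integrable M (\<lambda>\<omega>. exp (- K (\<sigma> m') u \<omega>) * ?W \<omega>)"
        using Wint[of m'] m'1 Wsplit by simp
    qed
    have e3: "AE \<omega> in M. real_cond_exp M (F u) ?W \<omega> = exp (- (\<Sum>j\<in>Am. K j u \<omega>) + \<Lambda> Am u) * C"
      using IH u0 um by (simp add: Am_def C_def)
    have e23: "AE \<omega> in M. real_cond_exp M (F u) ?W' \<omega> = (exp (- \<Lambda> Am' u) * exp (\<Lambda> Am u) * C) * \<eta> Am' u \<omega>"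
      using e2 e3 AE_space
    proof eventually_elim
      case (elim \<omega>)
      have f: "exp (- (\<Sum>j\<in>Am'. K j u \<omega>)) = \<eta> Am' u \<omega> * exp (- \<Lambda> Am' u)"
        using factor Am'sub u0 elim(3) by blast
      have "real_cond_exp M (F u) ?W' \<omega> = exp (- (\<Sum>j\<in>Am'. K j u \<omega>)) * exp (\<Lambda> Am u) * C"
        using elim(1,2) by (simp add: KSsplit exp_add exp_diff)
      also have "\<dots> = (exp (- \<Lambda> Am' u) * exp (\<Lambda> Am u) * C) * \<eta> Am' u \<omega>"
        using f by simp
      finally show ?case .
    qed
    have e4: "AE \<omega> in M. real_cond_exp M (F s) (real_cond_exp M (F u) ?W') \<omega>
        = real_cond_exp M (F s) (\<lambda>\<omega>. (exp (- \<Lambda> Am' u) * exp (\<Lambda> Am u) * C) * \<eta> Am' u \<omega>) \<omega>"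
    proof (rule FS.real_cond_exp_cong[OF e23])
      show "real_cond_exp M (F u) ?W' \<in> borel_measurable M"
        by (rule borel_measurable_cond_exp2)
      show "(\<lambda>\<omega>. (exp (- \<Lambda> Am' u) * exp (\<Lambda> Am u) * C) * \<eta> Am' u \<omega>) \<in> borel_measurable M" by measurable
    qed
    have e5: "AE \<omega> in M. real_cond_exp M (F s) (\<lambda>\<omega>. (exp (- \<Lambda> Am' u) * exp (\<Lambda> Am u) * C) * \<eta> Am' u \<omega>) \<omega>
        = (exp (- \<Lambda> Am' u) * exp (\<Lambda> Am u) * C) * real_cond_exp M (F s) (\<eta> Am' u) \<omega>"
      by (rule FS.real_cond_exp_cmult[OF etaint])
    have e6: "AE \<omega> in M. real_cond_exp M (F s) (\<eta> Am' u) \<omega> = \<eta> Am' s \<omega>"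
      using etaM s0 su by (simp add: martingale_def)
    show "AE \<omega> in M. real_cond_exp M (F s) (\<lambda>\<omega>. exp (- (\<Sum>i\<in>{n+1-Suc d..n}. K (\<sigma> i) (tt (\<sigma> i)) \<omega>))) \<omega>
        = exp (- (\<Sum>j\<in>\<sigma> ` {n+1-Suc d..n}. K j s \<omega>) + \<Lambda> (\<sigma> ` {n+1-Suc d..n}) s) *
          exp (- (\<Sum>k=n+1-Suc d..n. \<Lambda> (\<sigma> ` {k..n}) (tt (\<sigma> k)) - \<Lambda> (\<sigma> ` {Suc k..n}) (tt (\<sigma> k))))"
      unfolding em Csplit
      using e1 e4 e5 e6 AE_space
    proof eventually_elim
      case (elim \<omega>)
      have f: "exp (- (\<Sum>j\<in>Am'. K j s \<omega>)) = \<eta> Am' s \<omega> * exp (- \<Lambda> Am' s)"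
        using factor Am'sub s0 elim(5) by blast
      have f': "\<eta> Am' s \<omega> = exp (- (\<Sum>j\<in>Am'. K j s \<omega>) + \<Lambda> Am' s)"
      proof -
        have "exp (- (\<Sum>j\<in>Am'. K j s \<omega>) + \<Lambda> Am' s) = exp (- (\<Sum>j\<in>Am'. K j s \<omega>)) * exp (\<Lambda> Am' s)"
          by (rule exp_add)
        also have "\<dots> = \<eta> Am' s \<omega> * (exp (- \<Lambda> Am' s) * exp (\<Lambda> Am' s))" using f by simp
        also have "exp (- \<Lambda> Am' s) * exp (\<Lambda> Am' s) = 1" by (simp add: exp_add[symmetric])
        finally show ?thesis by simp
      qed
      have "real_cond_exp M (F s) ?W' \<omega> = (exp (- \<Lambda> Am' u) * exp (\<Lambda> Am u) * C) * \<eta> Am' s \<omega>"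
        using elim(1-4) by simp
      also have "\<dots> = exp (- (\<Sum>j\<in>Am'. K j s \<omega>) + \<Lambda> Am' s) * (exp (- (\<Lambda> Am' u - \<Lambda> Am u)) * C)"
        by (simp add: f' exp_add exp_diff exp_minus field_simps)
      finally show ?case by (simp add: Am'_def)
    qed
  qed
qed


lemma indep_core:
  fixes M N :: "'a measure" and I :: "nat set" and Y \<Theta> :: "nat \<Rightarrow> 'a \<Rightarrow> real" and G :: "'a set"
  assumes P: "prob_space M" and sub: "subalgebra M N" and fin: "finite I"
   and ind: "prob_space.indep_sets M (\<lambda>j. case j of None \<Rightarrow> sets N | Some i \<Rightarrow> {\<Theta> i -` B \<inter> space M | B. B \<in> sets borel}) (insert None (Some ` I))"
   and Ymeas: "\<And>i. i\<in>I \<Longrightarrow> Y i \<in> borel_measurable N"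
   and Ynn: "\<And>i \<omega>. i\<in>I \<Longrightarrow> \<omega>\<in>space M \<Longrightarrow> 0 \<le> Y i \<omega>"
   and Th: "\<And>i. i\<in>I \<Longrightarrow> distributed M lborel (\<Theta> i) (exponential_density 1)"
   and G: "G \<in> sets N"
  shows "(\<integral>\<^sup>+\<omega>. indicator G \<omega> * indicator {\<omega>\<in>space M. \<forall>i\<in>I. Y i \<omega> < \<Theta> i \<omega>} \<omega> \<partial>M)
       = (\<integral>\<^sup>+\<omega>. indicator G \<omega> * ennreal (exp (- (\<Sum>i\<in>I. Y i \<omega>))) \<partial>M)"
proof -
  interpret prob_space M by fact
  define E where "E = (\<lambda>j. case j of None \<Rightarrow> sets N | Some i \<Rightarrow> {\<Theta> i -` B \<inter> space M | B. B \<in> sets borel})"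
  define S where "S = (\<Union>i\<in>I. {\<Theta> i -` B \<inter> space M | B. B \<in> sets borel})"
  have spN: "space N = space M" using sub by (simp add: subalgebra_def)
  have setsN: "sets N \<subseteq> sets M" using sub by (simp add: subalgebra_def)
  have Thm: "\<And>i. i\<in>I \<Longrightarrow> \<Theta> i \<in> borel_measurable M"
    using Th by (metis distributed_measurable measurable_lborel1)
  have coll: "indep_sets (\<lambda>b. sigma_sets (space M) (\<Union>j\<in>(case b of True \<Rightarrow> {None} | False \<Rightarrow> Some ` I). E j)) UNIV"
  proof (rule indep_sets_collect_sigma)
    have "(\<Union>b\<in>UNIV. case b of True \<Rightarrow> {None} | False \<Rightarrow> Some ` I) = insert None (Some ` I)"
      by (auto split: bool.splits)
    then show "indep_sets E (\<Union>b\<in>UNIV. case b of True \<Rightarrow> {None} | False \<Rightarrow> Some ` I)"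
      using ind by (simp add: E_def)
  next
    fix i and b :: bool assume "i \<in> (case b of True \<Rightarrow> {None} | False \<Rightarrow> Some ` I)"
    show "Int_stable (E i)"
    proof (cases i)
      case None then show ?thesis by (simp add: E_def Int_stable_def)
    next
      case (Some a) then show ?thesis
        apply (simp add: E_def Int_stable_def)
        apply (metis (no_types, lifting) Int_assoc Int_left_commute inf.idem sets.Int vimage_Int)
        done
    qed
  next
    show "disjoint_family_on (\<lambda>b. case b of True \<Rightarrow> {None} | False \<Rightarrow> Some ` I) UNIV"
      by (auto simp: disjoint_family_on_def split: bool.splits)
  qed
  have cT: "sigma_sets (space M) (\<Union>j\<in>{None}. E j) = sets N"
    using sets.sigma_sets_eq[of N] by (simp add: E_def spN)
  have cF: "(\<Union>j\<in>Some ` I. E j) = S" by (auto simp: E_def S_def)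
  define MZ where "MZ = (borel :: real measure) \<Otimes>\<^sub>M PiM I (\<lambda>_. (borel :: real measure))"
  define MT where "MT = (borel :: real measure) \<Otimes>\<^sub>M PiM I (\<lambda>_. (borel :: real measure))"
  define Z where "Z = (\<lambda>\<omega>. (indicator G \<omega> :: real, \<lambda>i\<in>I. Y i \<omega>))"
  define T where "T = (\<lambda>\<omega>. (0::real, \<lambda>i\<in>I. \<Theta> i \<omega>))"
  have ZN: "Z \<in> measurable N MZ"
    unfolding Z_def MZ_def
    apply (rule measurable_Pair)
    using G apply simp
    apply (rule measurable_restrict) using Ymeas by simp
  have ZM: "Z \<in> measurable M MZ" using ZN measurable_from_subalg sub by blast
  have SP: "S \<subseteq> Pow (space M)" by (auto simp: S_def)
  have TS: "T \<in> measurable (sigma (space M) S) MT"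
    unfolding T_def MT_def
    apply (rule measurable_Pair) apply simp
  proof (rule measurable_restrict)
    fix i assume i: "i \<in> I"
    show "\<Theta> i \<in> borel_measurable (sigma (space M) S)"
    proof (rule measurableI)
      fix x assume "x \<in> space (sigma (space M) S)" then show "\<Theta> i x \<in> space borel" by simp
    next
      fix A :: "real set" assume "A \<in> sets borel"
      then have "\<Theta> i -` A \<inter> space M \<in> S" using i by (auto simp: S_def)
      then show "\<Theta> i -` A \<inter> space (sigma (space M) S) \<in> sets (sigma (space M) S)"
        using SP by (simp add: space_measure_of sigma_sets.Basic)
    qed
  qed
  have TM: "T \<in> measurable M MT"
    unfolding T_def MT_def by (rule measurable_Pair) (simp, rule measurable_restrict, use Thm in simp)
  have indZT: "indep_var MZ Z MT T"
    unfolding indep_var_eq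
  proof (intro conjI)
    show "random_variable MZ Z" by (fact ZM)
    show "random_variable MT T" by (fact TM)
    show "indep_set (sigma_sets (space M) {Z -` A \<inter> space M |A. A \<in> sets MZ})
                    (sigma_sets (space M) {T -` A \<inter> space M |A. A \<in> sets MT})"
      unfolding indep_set_def
    proof (rule indep_sets_mono_sets[OF coll])
      fix b :: bool
      show "case_bool (sigma_sets (space M) {Z -` A \<inter> space M |A. A \<in> sets MZ})
                      (sigma_sets (space M) {T -` A \<inter> space M |A. A \<in> sets MT}) b
          \<subseteq> sigma_sets (space M) (\<Union>j\<in>(case b of True \<Rightarrow> {None} | False \<Rightarrow> Some ` I). E j)"
      proof (cases b)
        case True
        have "{Z -` A \<inter> space M |A. A \<in> sets MZ} \<subseteq> sets N"
          using measurable_sets[OF ZN] spN by auto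
        then have "sigma_sets (space M) {Z -` A \<inter> space M |A. A \<in> sets MZ} \<subseteq> sets N"
          using sets.sigma_sets_subset[of "{Z -` A \<inter> space M |A. A \<in> sets MZ}" N] spN by simp
        then show ?thesis using True cT by simp
      next
        case False
        have "{T -` A \<inter> space M |A. A \<in> sets MT} \<subseteq> sigma_sets (space M) S"
          using measurable_sets[OF TS] SP by (auto simp: space_measure_of sets_measure_of)
        then have "sigma_sets (space M) {T -` A \<inter> space M |A. A \<in> sets MT} \<subseteq> sigma_sets (space M) S"
          by (rule sigma_sets_mono)
        then show ?thesis using False cF by simp
      qed
    qed
  qed

  have dist: "distr M MZ Z \<Otimes>\<^sub>M distr M MT T = distr M (MZ \<Otimes>\<^sub>M MT) (\<lambda>x. (Z x, T x))"
    using indZT indep_var_distribution_eq by blast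
  interpret MT': prob_space "distr M MT T" using prob_space_distr TM by blast
  define f where "f = (\<lambda>p::(real \<times> (nat\<Rightarrow>real)) \<times> (real \<times> (nat\<Rightarrow>real)).
     ennreal (fst (fst p)) * (if (\<forall>i\<in>I. max 0 (snd (fst p) i) < snd (snd p) i) then 1 else 0))"
  have c1: "(\<lambda>p. snd (fst p) i) \<in> borel_measurable (MZ \<Otimes>\<^sub>M MT)" if i: "i \<in> I" for i
    unfolding MZ_def MT_def
    by (rule measurable_compose[OF measurable_compose[OF measurable_fst measurable_snd] measurable_component_singleton[OF i]])
  have c2: "(\<lambda>p. snd (snd p) i) \<in> borel_measurable (MZ \<Otimes>\<^sub>M MT)" if i: "i \<in> I" for i
    unfolding MZ_def MT_def
    by (rule measurable_compose[OF measurable_compose[OF measurable_snd measurable_snd] measurable_component_singleton[OF i]])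
  have c0: "(\<lambda>p. fst (fst p)) \<in> borel_measurable (MZ \<Otimes>\<^sub>M MT)"
    unfolding MZ_def MT_def by (rule measurable_compose[OF measurable_fst measurable_fst])
  have Pm: "Measurable.pred (MZ \<Otimes>\<^sub>M MT) (\<lambda>p. \<forall>i\<in>I. max 0 (snd (fst p) i) < snd (snd p) i)"
  proof (rule pred_intros_finite(3)[OF fin])
    fix i assume i: "i \<in> I"
    note [measurable] = c1[OF i] c2[OF i]
    show "Measurable.pred (MZ \<Otimes>\<^sub>M MT) (\<lambda>p. max 0 (snd (fst p) i) < snd (snd p) i)" by measurable
  qed
  have fmeas: "f \<in> borel_measurable (MZ \<Otimes>\<^sub>M MT)"
  proof -
    note [measurable] = c0 Pm
    show ?thesis unfolding f_def by measurable
  qed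
  have inner: "(\<integral>\<^sup>+\<theta>. f (z,\<theta>) \<partial>distr M MT T) = ennreal (fst z) * ennreal (exp (- (\<Sum>i\<in>I. max 0 (snd z i))))"
    if z: "z \<in> space MZ" for z
  proof -
    define Ez where "Ez = {\<omega>\<in>space M. \<forall>i\<in>I. max 0 (snd z i) < \<Theta> i \<omega>}"
    have Ezs: "Ez \<in> events"
    proof -
      have "Measurable.pred M (\<lambda>\<omega>. \<forall>i\<in>I. max 0 (snd z i) < \<Theta> i \<omega>)"
      proof (rule pred_intros_finite(3)[OF fin])
        fix i assume i: "i \<in> I"
        note [measurable] = Thm[OF i]
        show "Measurable.pred M (\<lambda>\<omega>. max 0 (snd z i) < \<Theta> i \<omega>)" by measurable
      qed
      then show ?thesis unfolding Ez_def by (simp add: pred_def)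
    qed
    have fz: "(\<lambda>\<theta>. f (z,\<theta>)) \<in> borel_measurable MT"
      using fmeas z by (simp add: measurable_Pair2)
    have "(\<integral>\<^sup>+\<theta>. f (z,\<theta>) \<partial>distr M MT T) = (\<integral>\<^sup>+\<omega>. f (z, T \<omega>) \<partial>M)"
      using nn_integral_distr[OF TM, of "\<lambda>\<theta>. f (z,\<theta>)"] fz by simp
    also have "\<dots> = (\<integral>\<^sup>+\<omega>. ennreal (fst z) * indicator Ez \<omega> \<partial>M)"
      by (rule nn_integral_cong) (auto simp: f_def T_def Ez_def indicator_def)
    also have "\<dots> = ennreal (fst z) * emeasure M Ez"
      by (rule nn_integral_cmult_indicator[OF Ezs])
    also have "emeasure M Ez = ennreal (\<Prod>i\<in>I. exp (- max 0 (snd z i)))"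
    proof (cases "I = {}")
      case True
      then show ?thesis by (simp add: Ez_def emeasure_space_1)
    next
      case False
      define A where "A = (\<lambda>j. case j of Some i \<Rightarrow> {\<omega>\<in>space M. max 0 (snd z i) < \<Theta> i \<omega>} | None \<Rightarrow> {})"
      have "prob (\<Inter>j\<in>Some ` I. A j) = (\<Prod>j\<in>Some ` I. prob (A j))"
      proof (rule indep_setsD[OF ind])
        show "Some ` I \<subseteq> insert None (Some ` I)" by auto
        show "Some ` I \<noteq> {}" using False by auto
        show "finite (Some ` I)" using fin by auto
        show "\<forall>j\<in>Some ` I. A j \<in> (case j of None \<Rightarrow> sets N | Some i \<Rightarrow> {\<Theta> i -` B \<inter> space M |B. B \<in> sets borel})"
        proof
          fix j assume "j \<in> Some ` I"
          then obtain i where "j = Some i" "i \<in> I" by auto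
          then show "A j \<in> (case j of None \<Rightarrow> sets N | Some i \<Rightarrow> {\<Theta> i -` B \<inter> space M |B. B \<in> sets borel})"
            by (auto simp: A_def intro!: exI[of _ "{max 0 (snd z i)<..}"])
        qed
      qed
      moreover have "(\<Inter>j\<in>Some ` I. A j) = Ez" using False by (auto simp: A_def Ez_def)
      moreover have "(\<Prod>j\<in>Some ` I. prob (A j)) = (\<Prod>i\<in>I. exp (- max 0 (snd z i)))"
      proof -
        have "(\<Prod>j\<in>Some ` I. prob (A j)) = (\<Prod>i\<in>I. prob (A (Some i)))" by (simp add: prod.reindex)
        also have "\<dots> = (\<Prod>i\<in>I. exp (- max 0 (snd z i)))"
        proof (rule prod.cong[OF refl])
          fix i assume i: "i \<in> I"
          have "prob {\<omega>\<in>space M. max 0 (snd z i) < \<Theta> i \<omega>} = exp (- max 0 (snd z i) * 1)"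
            by (rule exponential_distributedD_gt[OF Th[OF i]]) auto
          then show "prob (A (Some i)) = exp (- max 0 (snd z i))" by (simp add: A_def)
        qed
        finally show ?thesis .
      qed
      ultimately show ?thesis by (simp add: emeasure_eq_measure)
    qed
    also have "(\<Prod>i\<in>I. exp (- max 0 (snd z i))) = exp (- (\<Sum>i\<in>I. max 0 (snd z i)))"
      using fin by (simp add: exp_sum sum_negf[symmetric])
    finally show ?thesis .
  qed
  have ZTM: "(\<lambda>x. (Z x, T x)) \<in> measurable M (MZ \<Otimes>\<^sub>M MT)"
    using ZM TM by (rule measurable_Pair)
  have "(\<integral>\<^sup>+\<omega>. indicator G \<omega> * indicator {\<omega>\<in>space M. \<forall>i\<in>I. Y i \<omega> < \<Theta> i \<omega>} \<omega> \<partial>M)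
      = (\<integral>\<^sup>+\<omega>. f (Z \<omega>, T \<omega>) \<partial>M)"
  proof (rule nn_integral_cong)
    fix \<omega> assume w: "\<omega> \<in> space M"
    then have mx: "\<And>i. i \<in> I \<Longrightarrow> max 0 (Y i \<omega>) = Y i \<omega>" using Ynn by (simp add: max_absorb2)
    show "indicator G \<omega> * indicator {\<omega>\<in>space M. \<forall>i\<in>I. Y i \<omega> < \<Theta> i \<omega>} \<omega> = f (Z \<omega>, T \<omega>)"
      using w by (simp add: f_def Z_def T_def indicator_def mx del: max_less_iff_conj)
  qed
  also have "\<dots> = (\<integral>\<^sup>+p. f p \<partial>distr M (MZ \<Otimes>\<^sub>M MT) (\<lambda>x. (Z x, T x)))"
    using nn_integral_distr[OF ZTM, of f] fmeas by simp
  also have "\<dots> = (\<integral>\<^sup>+p. f p \<partial>(distr M MZ Z \<Otimes>\<^sub>M distr M MT T))"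
    by (simp only: dist)
  also have "\<dots> = (\<integral>\<^sup>+z. \<integral>\<^sup>+\<theta>. f (z,\<theta>) \<partial>distr M MT T \<partial>distr M MZ Z)"
  proof (rule MT'.nn_integral_fst[symmetric])
    show "f \<in> borel_measurable (distr M MZ Z \<Otimes>\<^sub>M distr M MT T)"
    proof -
      have "sets (distr M MZ Z \<Otimes>\<^sub>M distr M MT T) = sets (MZ \<Otimes>\<^sub>M MT)"
        by (rule sets_pair_measure_cong) simp_all
      then show ?thesis using fmeas measurable_cong_sets[of "distr M MZ Z \<Otimes>\<^sub>M distr M MT T" "MZ \<Otimes>\<^sub>M MT" borel borel] by simp
    qed
  qed
  also have "\<dots> = (\<integral>\<^sup>+z. ennreal (fst z) * ennreal (exp (- (\<Sum>i\<in>I. max 0 (snd z i)))) \<partial>distr M MZ Z)"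
    by (rule nn_integral_cong) (rule inner, simp)
  also have "\<dots> = (\<integral>\<^sup>+\<omega>. ennreal (fst (Z \<omega>)) * ennreal (exp (- (\<Sum>i\<in>I. max 0 (snd (Z \<omega>) i)))) \<partial>M)"
  proof -
    have mz: "(\<lambda>z. ennreal (fst z) * ennreal (exp (- (\<Sum>i\<in>I. max 0 (snd z i))))) \<in> borel_measurable MZ"
    proof -
      have [measurable]: "(\<lambda>z. \<Sum>i\<in>I. max 0 (snd z i)) \<in> borel_measurable MZ"
      proof (rule borel_measurable_sum)
        fix i assume i: "i \<in> I"
        have [measurable]: "(\<lambda>z. snd z i) \<in> borel_measurable MZ"
          unfolding MZ_def by (rule measurable_compose[OF measurable_snd measurable_component_singleton[OF i]])
        show "(\<lambda>z. max 0 (snd z i)) \<in> borel_measurable MZ" by measurable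
      qed
      have [measurable]: "fst \<in> borel_measurable MZ" unfolding MZ_def by (rule measurable_fst)
      show ?thesis by measurable
    qed
    show ?thesis using nn_integral_distr[OF ZM, of "\<lambda>z. ennreal (fst z) * ennreal (exp (- (\<Sum>i\<in>I. max 0 (snd z i))))"] mz by simp
  qed
  also have "\<dots> = (\<integral>\<^sup>+\<omega>. indicator G \<omega> * ennreal (exp (- (\<Sum>i\<in>I. Y i \<omega>))) \<partial>M)"
  proof (rule nn_integral_cong)
    fix \<omega> assume w: "\<omega> \<in> space M"
    then have mx: "\<And>i. i \<in> I \<Longrightarrow> max 0 (Y i \<omega>) = Y i \<omega>" using Ynn by (simp add: max_absorb2)
    show "ennreal (fst (Z \<omega>)) * ennreal (exp (- (\<Sum>i\<in>I. max 0 (snd (Z \<omega>) i)))) = indicator G \<omega> * ennreal (exp (- (\<Sum>i\<in>I. Y i \<omega>)))"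
      by (simp add: Z_def mx ennreal_indicator cong: sum.cong)
  qed
  finally show ?thesis .
qed


lemma hit_iff:
  fixes X :: "real \<Rightarrow> 'a \<Rightarrow> real" and \<Theta> :: "'a \<Rightarrow> real"
  assumes cad: "cadlag M X" and mono: "mono_on {0..} (\<lambda>t. X t \<omega>)" and w: "\<omega> \<in> space M" and t0: "0 \<le> t"
  shows "hit_time X \<Theta> \<omega> > ereal t \<longleftrightarrow> X t \<omega> < \<Theta> \<omega>"
proof
  assume h: "hit_time X \<Theta> \<omega> > ereal t"
  show "X t \<omega> < \<Theta> \<omega>"
  proof (rule ccontr)
    assume "\<not> X t \<omega> < \<Theta> \<omega>"
    then have "X t \<omega> \<ge> \<Theta> \<omega>" by simp
    then have "hit_time X \<Theta> \<omega> \<le> ereal t" unfolding hit_time_def using t0 by (intro Inf_lower) auto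
    with h show False by simp
  qed
next
  assume lt: "X t \<omega> < \<Theta> \<omega>"
  have "((\<lambda>s. X s \<omega>) \<longlongrightarrow> X t \<omega>) (at_right t)" using cad w t0 by (simp add: cadlag_def)
  then have "eventually (\<lambda>s. X s \<omega> < \<Theta> \<omega>) (at_right t)" using lt order_tendstoD(2) by blast
  then obtain b where b: "b > t" and hb: "\<And>s. t < s \<Longrightarrow> s < b \<Longrightarrow> X s \<omega> < \<Theta> \<omega>"
    by (auto simp: eventually_at_right_field)
  have "ereal b \<le> hit_time X \<Theta> \<omega>" unfolding hit_time_def
  proof (rule Inf_greatest)
    fix x assume "x \<in> {ereal s |s. 0 \<le> s \<and> \<Theta> \<omega> \<le> X s \<omega>}"
    then obtain s where x: "x = ereal s" "0 \<le> s" "\<Theta> \<omega> \<le> X s \<omega>" by auto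
    have "b \<le> s"
    proof (rule ccontr)
      assume "\<not> b \<le> s"
      then have sb: "s < b" by simp
      show False
      proof (cases "s \<le> t")
        case True
        then have "X s \<omega> \<le> X t \<omega>" using mono_onD[OF mono, of s t] x(2) t0 by auto
        with lt x(3) show False by simp
      next
        case False
        then have "X s \<omega> < \<Theta> \<omega>" using hb sb by simp
        with x(3) show False by simp
      qed
    qed
    then show "ereal b \<le> x" using x by simp
  qed
  moreover have "ereal t < ereal b" using b by simp
  ultimately show "hit_time X \<Theta> \<omega> > ereal t" by (meson less_le_trans)
qed

theorem theorem4p1:
  fixes M :: "'a measure" and F :: "real \<Rightarrow> 'a measure" and n :: nat
    and K :: "nat \<Rightarrow> real \<Rightarrow> 'a \<Rightarrow> real" and \<Theta> :: "nat \<Rightarrow> 'a \<Rightarrow> real"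
    and \<eta> :: "nat set \<Rightarrow> real \<Rightarrow> 'a \<Rightarrow> real" and \<Lambda> :: "nat set \<Rightarrow> real \<Rightarrow> real"
    and tt :: "nat \<Rightarrow> real" and \<sigma> :: "nat \<Rightarrow> nat"
  assumes P: "prob_space M"
    and UC: "usual_conditions M F"
    and n: "n \<ge> 1"
    and K_adapted: "\<And>i. i \<in> {1..n} \<Longrightarrow> adapted F (K i)"
    and K_cadlag: "\<And>i. i \<in> {1..n} \<Longrightarrow> cadlag M (K i)"
    and K_mono: "\<And>i \<omega>. i \<in> {1..n} \<Longrightarrow> \<omega> \<in> space M \<Longrightarrow> mono_on {0..} (\<lambda>t. K i t \<omega>)"
    and K_zero: "\<And>i \<omega>. i \<in> {1..n} \<Longrightarrow> \<omega> \<in> space M \<Longrightarrow> K i 0 \<omega> = 0"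
    and Theta_exp: "\<And>i. i \<in> {1..n} \<Longrightarrow> distributed M lborel (\<Theta> i) (exponential_density 1)"
    and Theta_indep: "prob_space.indep_sets M
         (\<lambda>j. case j of None \<Rightarrow> (\<Union>t\<in>{0..}. sets (F t))
                     | Some i \<Rightarrow> {\<Theta> i -` B \<inter> space M | B. B \<in> sets borel})
         (insert None (Some ` {1..n}))"
    and Lambda_empty: "\<And>t. \<Lambda> {} t = 0"
    and Lambda_cont: "\<And>J. J \<subseteq> {1..n} \<Longrightarrow> J \<noteq> {} \<Longrightarrow> continuous_on {0..} (\<Lambda> J)"
    and eta_mart: "\<And>J. J \<subseteq> {1..n} \<Longrightarrow> J \<noteq> {} \<Longrightarrow> martingale M F (\<eta> J)"
    and eta_nonneg: "\<And>J t \<omega>. J \<subseteq> {1..n} \<Longrightarrow> J \<noteq> {} \<Longrightarrow> t \<ge> 0 \<Longrightarrow> \<omega> \<in> space M \<Longrightarrow> \<eta> J t \<omega> \<ge> 0"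
    and eta_zero: "\<And>J \<omega>. J \<subseteq> {1..n} \<Longrightarrow> J \<noteq> {} \<Longrightarrow> \<omega> \<in> space M \<Longrightarrow> \<eta> J 0 \<omega> = 1"
    and factor: "\<And>J t \<omega>. J \<subseteq> {1..n} \<Longrightarrow> J \<noteq> {} \<Longrightarrow> t \<ge> 0 \<Longrightarrow> \<omega> \<in> space M \<Longrightarrow>
         exp (- (\<Sum>j\<in>J. K j t \<omega>)) = \<eta> J t \<omega> * exp (- \<Lambda> J t)"
    and tt_nonneg: "\<And>i. i \<in> {1..n} \<Longrightarrow> tt i \<ge> 0"
    and \<sigma>_perm: "\<sigma> permutes {1..n}"
    and \<sigma>_sorted: "\<And>k l. 1 \<le> k \<Longrightarrow> k \<le> l \<Longrightarrow> l \<le> n \<Longrightarrow> tt (\<sigma> k) \<le> tt (\<sigma> l)"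
  shows "\<forall>t. 0 \<le> t \<and> t \<le> Min (tt ` {1..n}) \<longrightarrow>
    (AE \<omega> in M.
       real_cond_exp M (F t)
         (indicator {\<omega>\<in>space M. \<forall>i\<in>{1..n}. hit_time (K i) (\<Theta> i) \<omega> > ereal (tt i)}) \<omega>
       = \<eta> (\<sigma> ` {1..n}) t \<omega> *
         exp (- (\<Sum>k=1..n. \<Lambda> (\<sigma> ` {k..n}) (tt (\<sigma> k)) - \<Lambda> (\<sigma> ` {Suc k..n}) (tt (\<sigma> k)))))"
proof (intro allI impI)
  interpret prob_space M by fact
  fix t assume t: "0 \<le> t \<and> t \<le> Min (tt ` {1..n})"
  have t0: "0 \<le> t" using t by simp
  have tle: "\<And>i. i \<in> {1..n} \<Longrightarrow> t \<le> tt i" using t by (meson Min_le finite_atLeastAtMost finite_imageI image_eqI order_trans)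
  have filt: "filtration M F" using UC by (simp add: usual_conditions_def)
  have subF: "\<And>s. 0 \<le> s \<Longrightarrow> subalgebra M (F s)" using filt by (simp add: filtration_def)
  have monoF: "\<And>a b. 0 \<le> a \<Longrightarrow> a \<le> b \<Longrightarrow> sets (F a) \<subseteq> sets (F b)" using filt by (simp add: filtration_def)
  have KF: "\<And>i s. i \<in> {1..n} \<Longrightarrow> 0 \<le> s \<Longrightarrow> K i s \<in> borel_measurable (F s)"
    using K_adapted by (simp add: adapted_def)
  have KM: "\<And>i s. i \<in> {1..n} \<Longrightarrow> 0 \<le> s \<Longrightarrow> K i s \<in> borel_measurable M"
    using KF subF measurable_from_subalg by blast
  have K_nn: "\<And>i s \<omega>. i \<in> {1..n} \<Longrightarrow> 0 \<le> s \<Longrightarrow> \<omega> \<in> space M \<Longrightarrow> 0 \<le> K i s \<omega>"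
  proof -
    fix i :: nat and s :: real and \<omega> assume a: "i \<in> {1..n}" "0 \<le> s" "\<omega> \<in> space M"
    have "K i 0 \<omega> \<le> K i s \<omega>" using mono_onD[OF K_mono[OF a(1,3)], of 0 s] a(2) by auto
    then show "0 \<le> K i s \<omega>" using K_zero[OF a(1,3)] by simp
  qed
  have Thm: "\<And>i. i \<in> {1..n} \<Longrightarrow> \<Theta> i \<in> borel_measurable M"
    using Theta_exp by (metis distributed_measurable measurable_lborel1)
  define E where "E = {\<omega>\<in>space M. \<forall>i\<in>{1..n}. K i (tt i) \<omega> < \<Theta> i \<omega>}"
  have Eeq: "{\<omega>\<in>space M. \<forall>i\<in>{1..n}. hit_time (K i) (\<Theta> i) \<omega> > ereal (tt i)} = E"
    unfolding E_def using hit_iff[OF K_cadlag K_mono] tt_nonneg by auto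
  have Esets: "E \<in> events"
  proof -
    have "Measurable.pred M (\<lambda>\<omega>. \<forall>i\<in>{1..n}. K i (tt i) \<omega> < \<Theta> i \<omega>)"
    proof (rule pred_intros_finite(3))
      fix i assume i: "i \<in> {1..n}"
      note [measurable] = Thm[OF i] KM[OF i tt_nonneg[OF i]]
      show "Measurable.pred M (\<lambda>\<omega>. K i (tt i) \<omega> < \<Theta> i \<omega>)" by measurable
    qed simp
    then show ?thesis unfolding E_def by (simp add: pred_def)
  qed
  define W where "W = (\<lambda>\<omega>. exp (- (\<Sum>i\<in>{1..n}. K i (tt i) \<omega>)))"
  have Wmeas: "W \<in> borel_measurable M"
  proof -
    have [measurable]: "(\<lambda>\<omega>. \<Sum>i\<in>{1..n}. K i (tt i) \<omega>) \<in> borel_measurable M"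
      by (rule borel_measurable_sum) (use KM tt_nonneg in auto)
    show ?thesis unfolding W_def by measurable
  qed
  have Wbd: "\<And>\<omega>. \<omega> \<in> space M \<Longrightarrow> 0 \<le> W \<omega> \<and> W \<omega> \<le> 1"
  proof -
    fix \<omega> assume w: "\<omega> \<in> space M"
    have "0 \<le> (\<Sum>i\<in>{1..n}. K i (tt i) \<omega>)" by (rule sum_nonneg) (use K_nn tt_nonneg w in auto)
    then show "0 \<le> W \<omega> \<and> W \<omega> \<le> 1" by (simp add: W_def)
  qed
  have Wint: "integrable M W"
    by (rule integrable_const_bound[where B=1]) (use Wbd Wmeas in auto)
  have Eint: "integrable M (indicator E :: 'a \<Rightarrow> real)"
    using Esets by (simp add: emeasure_eq_measure)
  interpret FT: sigma_finite_subalgebra M "F t" by (rule sfs_sub[OF P subF[OF t0]])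
  define smax where "smax = Max (tt ` {1..n})"
  have tts: "\<And>i. i \<in> {1..n} \<Longrightarrow> tt i \<le> smax" unfolding smax_def by simp
  have s0: "0 \<le> smax" using tts[of 1] tt_nonneg[of 1] n by simp
  have ts: "t \<le> smax" using tle[of 1] tts[of 1] n by simp
  have ind: "indep_sets (\<lambda>j. case j of None \<Rightarrow> sets (F smax) | Some i \<Rightarrow> {\<Theta> i -` B \<inter> space M | B. B \<in> sets borel})
          (insert None (Some ` {1..n}))"
  proof (rule indep_sets_mono_sets[OF Theta_indep])
    fix j assume "j \<in> insert None (Some ` {1..n})"
    show "(case j of None \<Rightarrow> sets (F smax) | Some i \<Rightarrow> {\<Theta> i -` B \<inter> space M | B. B \<in> sets borel})
      \<subseteq> (case j of None \<Rightarrow> (\<Union>t\<in>{0..}. sets (F t)) | Some i \<Rightarrow> {\<Theta> i -` B \<inter> space M | B. B \<in> sets borel})"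
      using s0 by (cases j) auto
  qed
  have Ymeas: "\<And>i. i \<in> {1..n} \<Longrightarrow> (\<lambda>i. K i (tt i)) i \<in> borel_measurable (F smax)"
  proof -
    fix i assume i: "i \<in> {1..n}"
    have "subalgebra (F smax) (F (tt i))"
      using subF[OF s0] subF[OF tt_nonneg[OF i]] monoF[OF tt_nonneg[OF i] tts[OF i]]
      by (simp add: subalgebra_def)
    then show "(\<lambda>i. K i (tt i)) i \<in> borel_measurable (F smax)"
      using KF[OF i tt_nonneg[OF i]] measurable_from_subalg by auto
  qed
  have setint: "(\<integral>x\<in>A. indicator E x \<partial>M) = (\<integral>x\<in>A. W x \<partial>M)" if A: "A \<in> sets (F t)" for A
  proof -
    have AN: "A \<in> sets (F smax)" using A monoF[OF t0 ts] by auto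
    have AM: "A \<in> events" using A subF[OF t0] by (auto simp: subalgebra_def)
    have core: "(\<integral>\<^sup>+\<omega>. indicator A \<omega> * indicator {\<omega>\<in>space M. \<forall>i\<in>{1..n}. (\<lambda>i. K i (tt i)) i \<omega> < \<Theta> i \<omega>} \<omega> \<partial>M)
       = (\<integral>\<^sup>+\<omega>. indicator A \<omega> * ennreal (exp (- (\<Sum>i\<in>{1..n}. (\<lambda>i. K i (tt i)) i \<omega>))) \<partial>M)"
      by (rule indep_core[OF P subF[OF s0] _ ind Ymeas _ Theta_exp AN]) (use K_nn tt_nonneg in auto)
    have i1: "integrable M (\<lambda>x. indicator A x * indicator E x :: real)"
      using integrable_mult_indicator[OF AM Eint] by simp
    have i2: "integrable M (\<lambda>x. indicator A x * W x)"
      using integrable_mult_indicator[OF AM Wint] by simp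
    have "ennreal (\<integral>x. indicator A x * indicator E x \<partial>M) = (\<integral>\<^sup>+x. ennreal (indicator A x * indicator E x) \<partial>M)"
      by (rule nn_integral_eq_integral[OF i1, symmetric]) auto
    also have "\<dots> = (\<integral>\<^sup>+\<omega>. indicator A \<omega> * indicator E \<omega> \<partial>M)"
      by (simp add: ennreal_mult ennreal_indicator)
    also have "\<dots> = (\<integral>\<^sup>+\<omega>. indicator A \<omega> * ennreal (W \<omega>) \<partial>M)"
      using core by (simp add: E_def W_def)
    also have "\<dots> = (\<integral>\<^sup>+\<omega>. ennreal (indicator A \<omega> * W \<omega>) \<partial>M)"
      by (rule nn_integral_cong) (auto simp: indicator_def)
    also have "\<dots> = ennreal (\<integral>x. indicator A x * W x \<partial>M)"
      by (rule nn_integral_eq_integral[OF i2]) (use Wbd in auto)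
    finally have "ennreal (\<integral>x. indicator A x * indicator E x \<partial>M) = ennreal (\<integral>x. indicator A x * W x \<partial>M)" .
    moreover have "0 \<le> (\<integral>x. (indicator A x * indicator E x :: real) \<partial>M)" by (rule Bochner_Integration.integral_nonneg) auto
    moreover have "0 \<le> (\<integral>x. indicator A x * W x \<partial>M)" by (rule Bochner_Integration.integral_nonneg) (use Wbd in auto)
    ultimately show ?thesis by (simp add: set_lebesgue_integral_def)
  qed
  have ceq: "AE \<omega> in M. real_cond_exp M (F t) (indicator E) \<omega> = real_cond_exp M (F t) W \<omega>"
  proof (rule FT.real_cond_exp_charact)
    fix A assume A: "A \<in> sets (F t)"
    show "(\<integral>x\<in>A. indicator E x \<partial>M) = (\<integral>x\<in>A. real_cond_exp M (F t) W x \<partial>M)"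
      using setint[OF A] FT.real_cond_exp_intA[OF Wint A] by simp
  qed (use Eint Wint FT.real_cond_exp_int(1) in auto)
  have mp: "\<forall>s. 0 \<le> s \<and> (\<forall>k\<in>{n+1-n..n}. s \<le> tt (\<sigma> k)) \<longrightarrow>
     (AE \<omega> in M. real_cond_exp M (F s) (\<lambda>\<omega>. exp (- (\<Sum>i\<in>{n+1-n..n}. K (\<sigma> i) (tt (\<sigma> i)) \<omega>))) \<omega>
        = exp (- (\<Sum>j\<in>\<sigma> ` {n+1-n..n}. K j s \<omega>) + \<Lambda> (\<sigma> ` {n+1-n..n}) s) *
          exp (- (\<Sum>k=n+1-n..n. \<Lambda> (\<sigma> ` {k..n}) (tt (\<sigma> k)) - \<Lambda> (\<sigma> ` {Suc k..n}) (tt (\<sigma> k)))))"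
    by (rule mart_part[where M=M and F=F and n=n and K=K and \<eta>=\<eta> and \<Lambda>=\<Lambda> and tt=tt and \<sigma>=\<sigma> and d=n, OF P filt K_adapted K_nn Lambda_empty eta_mart factor tt_nonneg \<sigma>_perm \<sigma>_sorted]) auto
  have sig_in: "\<And>k. k \<in> {1..n} \<Longrightarrow> \<sigma> k \<in> {1..n}" using permutes_in_image[OF \<sigma>_perm] by blast
  have tk: "\<forall>k\<in>{1..n}. t \<le> tt (\<sigma> k)" using tle sig_in by auto
  have Wperm: "(\<lambda>\<omega>. exp (- (\<Sum>i\<in>{1..n}. K (\<sigma> i) (tt (\<sigma> i)) \<omega>))) = W"
  proof
    fix \<omega>
    have "(\<Sum>i\<in>{1..n}. K i (tt i) \<omega>) = (\<Sum>i\<in>{1..n}. K (\<sigma> i) (tt (\<sigma> i)) \<omega>)"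
      using sum.permute[OF \<sigma>_perm, of "\<lambda>i. K i (tt i) \<omega>"] by (simp add: comp_def)
    then show "exp (- (\<Sum>i\<in>{1..n}. K (\<sigma> i) (tt (\<sigma> i)) \<omega>)) = W \<omega>" by (simp add: W_def)
  qed
  have img: "\<sigma> ` {1..n} = {1..n}" by (rule permutes_image[OF \<sigma>_perm])
  have mp1: "AE \<omega> in M. real_cond_exp M (F t) W \<omega>
        = exp (- (\<Sum>j\<in>\<sigma> ` {1..n}. K j t \<omega>) + \<Lambda> (\<sigma> ` {1..n}) t) *
          exp (- (\<Sum>k=1..n. \<Lambda> (\<sigma> ` {k..n}) (tt (\<sigma> k)) - \<Lambda> (\<sigma> ` {Suc k..n}) (tt (\<sigma> k))))"
    using mp t0 tk Wperm by simp
  show "AE \<omega> in M.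
       real_cond_exp M (F t)
         (indicator {\<omega>\<in>space M. \<forall>i\<in>{1..n}. hit_time (K i) (\<Theta> i) \<omega> > ereal (tt i)}) \<omega>
       = \<eta> (\<sigma> ` {1..n}) t \<omega> *
         exp (- (\<Sum>k=1..n. \<Lambda> (\<sigma> ` {k..n}) (tt (\<sigma> k)) - \<Lambda> (\<sigma> ` {Suc k..n}) (tt (\<sigma> k))))"
    unfolding Eeq using ceq mp1 AE_space
  proof eventually_elim
    case (elim \<omega>)
    let ?J = "\<sigma> ` {1..n}"
    have Jsub: "?J \<subseteq> {1..n}" "?J \<noteq> {}" using img n by auto
    have f: "exp (- (\<Sum>j\<in>?J. K j t \<omega>)) = \<eta> ?J t \<omega> * exp (- \<Lambda> ?J t)"
      using factor[OF Jsub t0 elim(3)] .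
    have f': "\<eta> ?J t \<omega> = exp (- (\<Sum>j\<in>?J. K j t \<omega>) + \<Lambda> ?J t)"
    proof -
      have "exp (- (\<Sum>j\<in>?J. K j t \<omega>) + \<Lambda> ?J t) = exp (- (\<Sum>j\<in>?J. K j t \<omega>)) * exp (\<Lambda> ?J t)"
        by (rule exp_add)
      also have "\<dots> = \<eta> ?J t \<omega> * (exp (- \<Lambda> ?J t) * exp (\<Lambda> ?J t))" using f by simp
      also have "exp (- \<Lambda> ?J t) * exp (\<Lambda> ?J t) = 1" by (simp add: exp_add[symmetric])
      finally show ?thesis by simp
    qed
    show ?case using elim(1,2) f' by simp
  qed
qed

end
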